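(* Let $n,d\ge1$, $p>d$, $\Delta\in\mathbb{R}^{nd\times nd}$ symmetric with $d\times d$ blocks, $\Delta_{ii}=0$, $Z^{\top}=[I_d,\dots,I_d]$, $A=ZZ^{\top}+\Delta$, $f(S)=\langle A,SS^{\top}\rangle$, $\delta>0$. Suppose $S$ is a second-order critical point of $f$ with $d_F(S,Z)\le\delta\sqrt{d/n}\,\|\Delta\|_{\mathrm{op}}$. Then for every $1\le i\le n$, \[ \lambda_{\min}(\Lambda_{ii})\ge n-\frac{\delta^2d\|\Delta\|_{\mathrm{op}}^2}{2n}-\max_{1\le k\le n}\Big\|\sum_{j\ne k}\Delta_{kj}S_j\Big\|_{\mathrm{op}}, \] and \[ \max_{1\le i\le n}\Big\|\sum_{j\ne i}\Delta_{ij}S_j\Big\|_{\mathrm{op}}\le\delta\sqrt{\frac dn}\,\|\Delta\|_{\mathrm{op}}\max_{1\le i\le n}\|\Delta_i\|_{\mathrm{op}}+\max_{1\le i\le n}\|\Delta_i^{\top}Z\|_{\mathrm{op}}. \]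
   Context: $S\in\mathbb{R}^{nd\times p}$ has $d\times p$ blocks $S_i$ with $S_iS_i^{\top}=I_d$; $A_{ij}=I_d+\Delta_{ij}$; $\Delta_i^{\top}=[\Delta_{i1},\dots,\Delta_{in}]$ is the $i$-th block row of $\Delta$ ($\Delta_i$ the $i$-th block column), and $\Delta_i^{\top}Z=\sum_j\Delta_{ij}$. $\Lambda_{ii}=\frac12\sum_j(S_iS_j^{\top}A_{ji}+A_{ij}S_jS_i^{\top})$; $T_{S_i}=\{Y\in\mathbb{R}^{d\times p}:S_iY^{\top}+YS_i^{\top}=0\}$. $S$ is a second-order critical point if $\sum_jA_{ij}S_j=\Lambda_{ii}S_i$ for all $i$ and $\sum_i\langle\Lambda_{ii},\dot S_i\dot S_i^{\top}\rangle\ge\sum_{i,j}\langle A_{ij},\dot S_i\dot S_j^{\top}\rangle$ for all $\dot S_i\in T_{S_i}$. $d_F(S,Z)=\min\{(\sum_i\|S_i-Q\|_F^2)^{1/2}:QQ^{\top}=I_d,Q\in\mathbb{R}^{d\times p}\}$. *)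

theory Defs
  imports "HOL-Analysis.Analysis"
begin

text \<open>Block conventions. n is a natural number (number of blocks); the block sizes d and p
are the cardinalities of finite index types 'd and 'p. A d x p block is a value of type
real^'p^'d, a d x d block of type real^'d^'d. The nd x nd matrix Delta is given by its
blocks Delta i j (i, j < n); the nd x p matrix S by its blocks S i (i < n).
Inner product and norm on matrices are the Frobenius ones (inner/norm of real^'a^'b).\<close>

definition Ablk :: "(nat \<Rightarrow> nat \<Rightarrow> real^'d^'d) \<Rightarrow> nat \<Rightarrow> nat \<Rightarrow> real^'d^'d" where
  "Ablk \<Delta> i j = mat 1 + \<Delta> i j"

definition Lam :: "nat \<Rightarrow> (nat \<Rightarrow> nat \<Rightarrow> real^'d^'d) \<Rightarrow> (nat \<Rightarrow> real^'p^'d) \<Rightarrow> nat \<Rightarrow> real^'d^'d" where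
  "Lam n \<Delta> S i = (1/2) *\<^sub>R (\<Sum>j<n. S i ** transpose (S j) ** Ablk \<Delta> j i
                                   + Ablk \<Delta> i j ** S j ** transpose (S i))"

definition tangent :: "real^'p^'d \<Rightarrow> (real^'p^'d) set" where
  "tangent Si = {Y. Si ** transpose Y + Y ** transpose Si = 0}"

definition second_order_critical ::
  "nat \<Rightarrow> (nat \<Rightarrow> nat \<Rightarrow> real^'d^'d) \<Rightarrow> (nat \<Rightarrow> real^'p^'d) \<Rightarrow> bool" where
  "second_order_critical n \<Delta> S \<longleftrightarrow>
     (\<forall>i<n. (\<Sum>j<n. Ablk \<Delta> i j ** S j) = Lam n \<Delta> S i ** S i) \<and>
     (\<forall>Sd :: nat \<Rightarrow> real^'p^'d. (\<forall>i<n. Sd i \<in> tangent (S i)) \<longrightarrow>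
        (\<Sum>i<n. Lam n \<Delta> S i \<bullet> (Sd i ** transpose (Sd i)))
          \<ge> (\<Sum>i<n. \<Sum>j<n. Ablk \<Delta> i j \<bullet> (Sd i ** transpose (Sd j))))"

text \<open>d_F(S,Z) = min over Q with Q Q^T = I of (sum_i ||S_i - Q||_F^2)^(1/2)
  (the minimum exists by compactness, so Inf = min).\<close>
definition dF :: "nat \<Rightarrow> (nat \<Rightarrow> real^'p^'d) \<Rightarrow> real" where
  "dF n S = Inf {sqrt (\<Sum>i<n. (norm (S i - Q))\<^sup>2) | Q :: real^'p^'d. Q ** transpose Q = mat 1}"

definition opnorm :: "real^'a^'b \<Rightarrow> real" where
  "opnorm M = onorm (\<lambda>x. M *v x)"

definition blk_opnorm :: "nat \<Rightarrow> (nat \<Rightarrow> nat \<Rightarrow> real^'d^'d) \<Rightarrow> real" where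
  "blk_opnorm n \<Delta> = Sup {sqrt (\<Sum>i<n. (norm (\<Sum>j<n. \<Delta> i j *v x j))\<^sup>2) | x :: nat \<Rightarrow> real^'d.
                          (\<Sum>j<n. (norm (x j))\<^sup>2) = 1}"

text \<open>Operator norm of the i-th block column Delta_i (an nd x d matrix with blocks Delta j i).\<close>
definition col_opnorm :: "nat \<Rightarrow> (nat \<Rightarrow> nat \<Rightarrow> real^'d^'d) \<Rightarrow> nat \<Rightarrow> real" where
  "col_opnorm n \<Delta> i = Sup {sqrt (\<Sum>j<n. (norm (\<Delta> j i *v y))\<^sup>2) | y :: real^'d. norm y = 1}"

definition lambda_min :: "real^'d^'d \<Rightarrow> real" where
  "lambda_min M = Min {l. \<exists>v. v \<noteq> 0 \<and> M *v v = l *\<^sub>R v}"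

end

theory Submission
  imports Defs
begin

lemma inner_mv: "inner ((A::real^'n^'m) *v x) y = inner x (transpose A *v y)"
  by (metis dot_lmul_matrix inner_commute transpose_matrix_vector)

lemma sum_mv: "(sum f I) *v (x::real^'n) = (\<Sum>j\<in>I. (f j :: real^'n^'m) *v x)"
  by (induction I rule: infinite_finite_induct) (auto simp: matrix_vector_mult_add_rdistrib)

lemma sum_vm: "(x::real^'m) v* (sum f I) = (\<Sum>j\<in>I. x v* (f j :: real^'n^'m))"
  by (induction I rule: infinite_finite_induct) (auto simp: vector_matrix_mult_add_rdistrib)

lemma matrix_add_rdistrib': "((B + C) ** A) = (B ** A) + (C ** A)"
  by (vector matrix_matrix_mult_def sum.distrib[symmetric] field_simps)

lemma sum_mm: "(sum f I) ** (B::real^'p^'n) = (\<Sum>j\<in>I. (f j :: real^'n^'m) ** B)"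
  by (induction I rule: infinite_finite_induct) (auto simp: matrix_add_rdistrib')

lemma norm_sq_vec: "(norm (x::'a::real_normed_vector^'n))^2 = (\<Sum>i\<in>UNIV. (norm (x$i))^2)"
  by (simp add: norm_vec_def L2_set_def sum_nonneg)

lemma frob: "norm ((A::real^'n^'m) *v x) \<le> norm A * norm x"
proof -
  have "(norm (A *v x))^2 = (\<Sum>r\<in>UNIV. ((A$r) \<bullet> x)^2)"
    by (simp add: norm_sq_vec matrix_vector_mul_component)
  also have "\<dots> \<le> (\<Sum>r\<in>UNIV. (norm (A$r))^2 * (norm x)^2)"
  proof (rule sum_mono)
    fix r
    have "\<bar>(A$r) \<bullet> x\<bar> \<le> norm (A$r) * norm x" by (rule Cauchy_Schwarz_ineq2)
    then show "((A$r) \<bullet> x)^2 \<le> (norm (A$r))^2 * (norm x)^2"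
      by (metis abs_ge_zero power2_abs power_mono power_mult_distrib)
  qed
  also have "\<dots> = (\<Sum>r\<in>UNIV. (norm (A$r))^2) * (norm x)^2"
    by (rule sum_distrib_right[symmetric])
  also have "\<dots> = ((norm A) * norm x)^2"
    by (simp only: norm_sq_vec[of A, symmetric] power_mult_distrib)
  finally show ?thesis
    by (meson mult_nonneg_nonneg norm_ge_zero power2_le_imp_le)
qed

lemma transp_bound:
  fixes A :: "real^'n^'m"
  assumes "\<And>y. norm (A *v y) \<le> c * norm y" "c \<ge> 0"
  shows "norm (transpose A *v x) \<le> c * norm x"
proof -
  let ?z = "transpose A *v x"
  have "(norm ?z)^2 = inner ?z ?z" by (simp add: power2_norm_eq_inner)
  also have "\<dots> = inner x (A *v ?z)" by (simp add: dot_lmul_matrix)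
  also have "\<dots> \<le> norm x * norm (A *v ?z)" by (rule norm_cauchy_schwarz)
  also have "\<dots> \<le> norm x * (c * norm ?z)" using assms(1) by (simp add: mult_left_mono)
  finally have "norm ?z * norm ?z \<le> (c * norm x) * norm ?z" by (simp add: power2_eq_square mult_ac)
  then show ?thesis using assms(2)
    by (cases "norm ?z = 0") (auto simp: mult_le_cancel_right)
qed

lemma orth_transp_norm:
  fixes S :: "real^'p^'d"
  assumes "S ** transpose S = mat 1"
  shows "norm (transpose S *v x) = norm x"
proof -
  have "(norm (transpose S *v x))^2 = inner x (S *v (transpose S *v x))"
    by (simp add: power2_norm_eq_inner dot_lmul_matrix)
  also have "\<dots> = (norm x)^2"
    by (metis transpose_matrix_vector matrix_vector_mul_assoc assms matrix_vector_mul_lid power2_norm_eq_inner)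
  finally show ?thesis by simp
qed

lemma orth_norm_le:
  fixes Q :: "real^'p^'d"
  assumes "Q ** transpose Q = mat 1"
  shows "norm (Q *v y) \<le> norm y"
proof -
  have "(norm (Q *v y))^2 = inner y (transpose Q *v (Q *v y))"
    by (metis inner_mv power2_norm_eq_inner transpose_transpose inner_commute)
  also have "\<dots> \<le> norm y * norm (Q *v y)"
    using norm_cauchy_schwarz orth_transp_norm[OF assms] by metis
  finally show ?thesis
    by (metis mult.commute mult_le_cancel_right norm_ge_zero power2_eq_square order_le_less)
qed

lemma col_bdd:
  "bdd_above {sqrt (\<Sum>j<n. (norm (\<Delta> j i *v y))\<^sup>2) | y :: real^'d. norm y = 1}"
proof -
  have H: "sqrt (\<Sum>j<n. (norm (\<Delta> j i *v y))\<^sup>2) \<le> sqrt (\<Sum>j<n. (norm (\<Delta> j i))\<^sup>2)"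
    if y: "norm y = 1" for y :: "real^'d"
  proof -
    have "(\<Sum>j<n. (norm (\<Delta> j i *v y))\<^sup>2) \<le> (\<Sum>j<n. (norm (\<Delta> j i))\<^sup>2)"
    proof (rule sum_mono)
      fix j show "(norm (\<Delta> j i *v y))\<^sup>2 \<le> (norm (\<Delta> j i))\<^sup>2"
        using frob[of "\<Delta> j i" y] y by (simp add: power_mono)
    qed
    then show ?thesis by simp
  qed
  show ?thesis unfolding bdd_above_def using H by blast
qed

lemma col_upper:
  assumes "norm (y::real^'d) = 1"
  shows "sqrt (\<Sum>j<n. (norm (\<Delta> j i *v y))\<^sup>2) \<le> col_opnorm n \<Delta> i"
  unfolding col_opnorm_def
  by (rule cSup_upper[OF _ col_bdd]) (use assms in blast)

lemma col_nonneg: "0 \<le> col_opnorm n (\<Delta>::nat \<Rightarrow> nat \<Rightarrow> real^'d^'d) i"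
proof -
  obtain k :: 'd where True by simp
  have "norm (axis k (1::real)) = 1" by (rule norm_axis_1)
  from col_upper[OF this, where n=n and \<Delta>=\<Delta> and i=i] show ?thesis
    by (meson order_trans real_sqrt_ge_zero sum_nonneg zero_le_power2)
qed

lemma dual:
  fixes \<Delta> :: "nat \<Rightarrow> nat \<Rightarrow> real^'d^'d" and x :: "nat \<Rightarrow> real^'d"
  assumes sym: "\<forall>j<n. \<Delta> j i = transpose (\<Delta> i j)"
  shows "norm (\<Sum>j<n. \<Delta> i j *v x j) \<le> col_opnorm n \<Delta> i * sqrt (\<Sum>j<n. (norm (x j))\<^sup>2)"
proof (cases "(\<Sum>j<n. \<Delta> i j *v x j) = 0")
  case True
  then show ?thesis using col_nonneg[of n \<Delta> i] by (simp add: sum_nonneg)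
next
  case False
  define w where "w = (\<Sum>j<n. \<Delta> i j *v x j)"
  define u where "u = (1 / norm w) *\<^sub>R w"
  have wn: "norm w > 0" using False w_def by simp
  have u1: "norm u = 1" using wn by (simp add: u_def)
  have "norm w = inner u w" using wn by (simp add: u_def power2_norm_eq_inner[symmetric] power2_eq_square)
  also have "\<dots> = (\<Sum>j<n. inner u (\<Delta> i j *v x j))" by (simp add: w_def inner_sum_right)
  also have "\<dots> = (\<Sum>j<n. inner (\<Delta> j i *v u) (x j))"
  proof (rule sum.cong[OF refl])
    fix j assume "j \<in> {..<n}"
    then have "\<Delta> j i = transpose (\<Delta> i j)" using sym by auto
    then show "inner u (\<Delta> i j *v x j) = inner (\<Delta> j i *v u) (x j)"
      by simp (metis dot_lmul_matrix inner_commute)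
  qed
  also have "\<dots> \<le> (\<Sum>j<n. \<bar>norm (\<Delta> j i *v u)\<bar> * \<bar>norm (x j)\<bar>)"
    by (rule sum_mono) (simp add: norm_cauchy_schwarz)
  also have "\<dots> \<le> L2_set (\<lambda>j. norm (\<Delta> j i *v u)) {..<n} * L2_set (\<lambda>j. norm (x j)) {..<n}"
    by (rule L2_set_mult_ineq)
  also have "\<dots> \<le> col_opnorm n \<Delta> i * sqrt (\<Sum>j<n. (norm (x j))\<^sup>2)"
    unfolding L2_set_def
    by (rule mult_right_mono[OF col_upper[OF u1]]) (simp add: sum_nonneg)
  finally show ?thesis by (simp add: w_def)
qed

lemma opnorm_nonneg: "0 \<le> opnorm (A::real^'n^'m)"
  unfolding opnorm_def by (rule onorm_pos_le) simp

lemma opnorm_bound: "norm ((A::real^'n^'m) *v x) \<le> opnorm A * norm x"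
  unfolding opnorm_def by (rule onorm) simp

lemma part2_Q:
  fixes \<Delta> :: "nat \<Rightarrow> nat \<Rightarrow> real^'d^'d" and S :: "nat \<Rightarrow> real^'p^'d" and Q :: "real^'p^'d"
  assumes sym: "\<forall>j<n. \<Delta> j i = transpose (\<Delta> i j)" and Q: "Q ** transpose Q = mat 1"
  shows "opnorm (\<Sum>j<n. \<Delta> i j ** S j) \<le>
    col_opnorm n \<Delta> i * sqrt (\<Sum>j<n. (norm (S j - Q))\<^sup>2) + opnorm (\<Sum>j<n. \<Delta> i j)"
  unfolding opnorm_def[of "\<Sum>j<n. \<Delta> i j ** S j"]
proof (rule onorm_le)
  fix y :: "real^'p"
  let ?c = "col_opnorm n \<Delta> i" and ?t = "sqrt (\<Sum>j<n. (norm (S j - Q))\<^sup>2)"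
  have eq: "(\<Sum>j<n. \<Delta> i j ** S j) *v y
      = (\<Sum>j<n. \<Delta> i j *v ((S j - Q) *v y)) + (\<Sum>j<n. \<Delta> i j) *v (Q *v y)"
  proof -
    have "(\<Sum>j<n. \<Delta> i j ** S j) *v y = (\<Sum>j<n. \<Delta> i j *v (S j *v y))"
      by (simp add: sum_mv matrix_vector_mul_assoc)
    also have "\<dots> = (\<Sum>j<n. \<Delta> i j *v ((S j - Q) *v y) + \<Delta> i j *v (Q *v y))"
      by (rule sum.cong[OF refl]) (simp add: matrix_vector_mult_diff_rdistrib matrix_vector_right_distrib[symmetric])
    also have "\<dots> = (\<Sum>j<n. \<Delta> i j *v ((S j - Q) *v y)) + (\<Sum>j<n. \<Delta> i j) *v (Q *v y)"
      by (simp add: sum.distrib sum_mv)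
    finally show ?thesis .
  qed
  have n1: "norm (\<Sum>j<n. \<Delta> i j *v ((S j - Q) *v y)) \<le> ?c * ?t * norm y"
  proof -
    have "norm (\<Sum>j<n. \<Delta> i j *v ((S j - Q) *v y)) \<le> ?c * sqrt (\<Sum>j<n. (norm ((S j - Q) *v y))\<^sup>2)"
      by (rule dual[OF sym])
    also have "\<dots> \<le> ?c * sqrt (\<Sum>j<n. (norm (S j - Q) * norm y)\<^sup>2)"
      by (intro mult_left_mono col_nonneg real_sqrt_le_mono sum_mono power_mono frob) simp
    also have "\<dots> = ?c * ?t * norm y"
      by (simp add: power_mult_distrib sum_distrib_right[symmetric] real_sqrt_mult)
    finally show ?thesis .
  qed
  have n2: "norm ((\<Sum>j<n. \<Delta> i j) *v (Q *v y)) \<le> opnorm (\<Sum>j<n. \<Delta> i j) * norm y"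
    using opnorm_bound[of "\<Sum>j<n. \<Delta> i j" "Q *v y"] orth_norm_le[OF Q, of y]
      opnorm_nonneg[of "\<Sum>j<n. \<Delta> i j"]
    by (meson mult_left_mono order_trans)
  show "norm ((\<Sum>j<n. \<Delta> i j ** S j) *v y) \<le> (?c * ?t + opnorm (\<Sum>j<n. \<Delta> i j)) * norm y"
    unfolding eq using norm_triangle_le[OF add_mono[OF n1 n2]] by (simp add: algebra_simps)
qed

lemma exists_orth:
  assumes "CARD('d) \<le> CARD('p)"
  shows "\<exists>Q :: real^'p^'d. Q ** transpose Q = mat 1"
proof -
  obtain f :: "'d \<Rightarrow> 'p" where f: "inj f"
    using card_le_inj[of "UNIV::'d set" "UNIV::'p set"] assms by auto
  define Q :: "real^'p^'d" where "Q = (\<chi> r c. if c = f r then 1 else 0)"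
  have "Q ** transpose Q = mat 1"
  proof -
    have "(\<Sum>c\<in>UNIV. (if c = f r then 1 else 0) * (if c = f s then 1 else (0::real))) = (if r = s then 1 else 0)" for r s
    proof -
      have "(\<Sum>c\<in>UNIV. (if c = f r then 1 else 0) * (if c = f s then 1 else (0::real)))
          = (\<Sum>c\<in>UNIV. if c = f r then (if f r = f s then 1 else 0) else 0)"
        by (rule sum.cong) auto
      also have "\<dots> = (if r = s then 1 else 0)" using f by (simp add: inj_eq)
      finally show ?thesis .
    qed
    then show ?thesis
      by (simp add: Q_def vec_eq_iff matrix_matrix_mult_def transpose_def mat_def)
  qed
  then show ?thesis by blast
qed

lemma exists_kernel:
  fixes S :: "real^'p^'d"
  assumes "CARD('d) < CARD('p)"
  shows "\<exists>w. w \<noteq> 0 \<and> S *v w = 0"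
proof (rule ccontr)
  assume "\<not> ?thesis"
  then have inj: "inj ((*v) S)"
    by (metis (no_types, lifting) injI eq_iff_diff_eq_0 matrix_vector_mult_diff_distrib)
  have lin: "linear ((*v) S)" by simp
  have "dim (range ((*v) S)) = dim (UNIV :: (real^'p) set)"
    by (rule dim_image_eq[OF lin]) (use inj in \<open>auto simp: inj_on_def\<close>)
  moreover have "dim (range ((*v) S)) \<le> CARD('d)"
    using dim_subset_UNIV[of "range ((*v) S)"] by simp
  ultimately show False using assms by simp
qed

lemma quad0:
  fixes a c :: real
  assumes c: "c \<ge> 0" and H: "\<And>t. 0 \<le> 2*t*a + t^2*c"
  shows "a = 0"
proof -
  define k where "k = c + 1"
  have k: "k > 0" using c by (simp add: k_def)
  define t where "t = -a/k"
  have tk: "t * k = -a" using k by (simp add: t_def)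
  have "k^2*(2*t*a + t^2*c) = 2*k*a*(t*k) + (t*k)^2*c" by (simp add: algebra_simps power2_eq_square)
  also have "\<dots> = -(a^2*(c+2))" unfolding tk by (simp add: k_def algebra_simps power2_eq_square)
  finally have "0 \<le> -(a^2*(c+2))" using H[of t] k by (metis zero_le_power2 mult_nonneg_nonneg)
  then have "a^2 * (c+2) \<le> 0" by simp
  then have "a^2 \<le> 0" using c by (smt (verit) mult_pos_pos zero_less_power2)
  then show ?thesis by simp
qed

lemma sym_inner:
  fixes M :: "real^'d^'d"
  assumes "transpose M = M"
  shows "inner (M *v x) y = inner x (M *v y)"
  using inner_mv[of M x y] assms by simp

lemma eig_finite:
  fixes M :: "real^'d^'d"
  assumes sym: "transpose M = M"
  shows "finite {l. \<exists>v. v \<noteq> 0 \<and> M *v v = l *\<^sub>R v}"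
proof -
  define E where "E = {l. \<exists>v. v \<noteq> 0 \<and> M *v v = l *\<^sub>R v}"
  define e where "e l = (SOME v. v \<noteq> 0 \<and> M *v v = l *\<^sub>R v)" for l
  have e: "e l \<noteq> 0 \<and> M *v e l = l *\<^sub>R e l" if "l \<in> E" for l
    using that unfolding E_def e_def by (metis (mono_tags, lifting) mem_Collect_eq someI_ex)
  have inj: "inj_on e E"
  proof (rule inj_onI)
    fix l1 l2 assume l: "l1 \<in> E" "l2 \<in> E" "e l1 = e l2"
    then have "l1 *\<^sub>R e l1 = l2 *\<^sub>R e l1" using e by metis
    then show "l1 = l2" using e[OF l(1)] by (simp add: scaleR_cancel_right)
  qed
  have orth: "pairwise orthogonal (e ` E)"
  proof (rule pairwiseI)
    fix x y assume "x \<in> e ` E" "y \<in> e ` E" "x \<noteq> y"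
    then obtain l1 l2 where l: "l1 \<in> E" "l2 \<in> E" "x = e l1" "y = e l2" "l1 \<noteq> l2" by blast
    have "l1 * inner x y = inner (M *v x) y" using e[OF l(1)] l(3) by simp
    also have "\<dots> = inner x (M *v y)" by (rule sym_inner[OF sym])
    also have "\<dots> = l2 * inner x y" using e[OF l(2)] l(4) by simp
    finally show "orthogonal x y" using l(5) by (simp add: orthogonal_def)
  qed
  have "0 \<notin> e ` E" using e by auto
  then have "independent (e ` E)" using pairwise_orthogonal_independent[OF orth] by blast
  then have "finite (e ` E)" using independent_bound by blast
  then show ?thesis using finite_imageD[OF _ inj] by (simp add: E_def)
qed

lemma eig_exists:
  fixes M :: "real^'d^'d"
  assumes sym: "transpose M = M"
  shows "\<exists>l v. v \<noteq> 0 \<and> M *v v = l *\<^sub>R v"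
proof -
  let ?q = "\<lambda>x. inner x (M *v x)"
  let ?K = "sphere (0::real^'d) 1"
  obtain k :: 'd where True by simp
  have ne: "?K \<noteq> {}" using norm_axis_1[of k] by (metis dist_0_norm mem_sphere empty_iff)
  have cont: "continuous_on ?K ?q"
    by (intro continuous_on_inner continuous_on_id linear_continuous_on matrix_vector_mul_bounded_linear)
  obtain v where v: "v \<in> ?K" and vmin: "\<And>y. y \<in> ?K \<Longrightarrow> ?q v \<le> ?q y"
    using continuous_attains_inf[OF compact_sphere ne cont] by blast
  have v1: "norm v = 1" using v by simp
  define \<mu> where "\<mu> = ?q v"
  define B where "B = M - \<mu> *\<^sub>R mat 1"
  have Bx: "B *v x = M *v x - \<mu> *\<^sub>R x" for x
    by (simp add: B_def matrix_vector_mult_diff_rdistrib scaleR_matrix_vector_assoc[symmetric])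
  have Bsym: "inner (B *v x) y = inner x (B *v y)" for x y
    by (simp add: Bx inner_diff_left inner_diff_right sym_inner[OF sym])
  have psd: "0 \<le> inner x (B *v x)" for x
  proof (cases "x = 0")
    case True then show ?thesis by simp
  next
    case False
    define x' where "x' = (1 / norm x) *\<^sub>R x"
    have "x' \<in> ?K" using False by (simp add: x'_def)
    then have "\<mu> \<le> ?q x'" using vmin \<mu>_def by blast
    also have "?q x' = ?q x / (norm x)^2"
      by (simp add: x'_def matrix_vector_mult_scaleR power2_eq_square)
    finally have "\<mu> * (norm x)^2 \<le> ?q x" using False by (simp add: field_simps)
    then show ?thesis by (simp add: Bx inner_diff_right power2_norm_eq_inner)
  qed
  have v0: "inner v (B *v v) = 0"
    using v1 by (simp add: Bx inner_diff_right \<mu>_def power2_norm_eq_inner[symmetric])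
  have "inner w (B *v v) = 0" for w
  proof (rule quad0)
    show "0 \<le> inner w (B *v w)" by (rule psd)
    fix t :: real
    have "0 \<le> inner (v + t *\<^sub>R w) (B *v (v + t *\<^sub>R w))" by (rule psd)
    also have "\<dots> = inner v (B *v v) + t * inner v (B *v w) + t * inner w (B *v v) + t^2 * inner w (B *v w)"
      by (simp add: matrix_vector_right_distrib matrix_vector_mult_scaleR inner_add_left inner_add_right
          algebra_simps power2_eq_square)
    also have "inner v (B *v w) = inner w (B *v v)" by (metis Bsym inner_commute)
    finally show "0 \<le> 2 * t * inner w (B *v v) + t^2 * inner w (B *v w)" using v0 by simp
  qed
  then have "inner (B *v v) (B *v v) = 0" by blast
  then have "B *v v = 0" by simp
  then have "M *v v = \<mu> *\<^sub>R v" by (simp add: Bx)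
  moreover have "v \<noteq> 0" using v1 by auto
  ultimately show ?thesis by blast
qed

lemma sum_single:
  assumes "finite A" "i \<in> A" "\<And>k. k \<in> A \<Longrightarrow> k \<noteq> i \<Longrightarrow> f k = 0"
  shows "sum f A = f i"
proof -
  have "sum f A = f i + sum f (A - {i})" using assms by (simp add: sum.remove)
  also have "sum f (A - {i}) = 0" using assms by (intro sum.neutral) auto
  finally show ?thesis by simp
qed

lemma transpose_add': "transpose (A + B) = transpose A + transpose (B::real^'n^'m)"
  by (simp add: transpose_def vec_eq_iff)

lemma transpose_zero': "transpose (0::real^'n^'m) = 0"
  by (simp add: transpose_def vec_eq_iff)

lemma transpose_sum: "transpose (sum f I) = (\<Sum>j\<in>I. transpose (f j :: real^'n^'m))"
  by (induction I rule: infinite_finite_induct) (auto simp: transpose_add' transpose_zero')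

lemma Lam_sym:
  fixes \<Delta> :: "nat \<Rightarrow> nat \<Rightarrow> real^'d^'d" and S :: "nat \<Rightarrow> real^'p^'d"
  assumes sym: "\<forall>i<n. \<forall>j<n. \<Delta> j i = transpose (\<Delta> i j)" and i: "i < n"
  shows "transpose (Lam n \<Delta> S i) = Lam n \<Delta> S i"
proof -
  have AT: "transpose (Ablk \<Delta> j i) = Ablk \<Delta> i j" if "j < n" for j
  proof -
    have "\<Delta> j i = transpose (\<Delta> i j)" using sym that i by blast
    then show ?thesis by (simp add: Ablk_def transpose_add')
  qed
  have TT: "transpose (S i ** transpose (S j) ** Ablk \<Delta> j i + Ablk \<Delta> i j ** S j ** transpose (S i))
      = Ablk \<Delta> i j ** S j ** transpose (S i) + S i ** transpose (S j) ** Ablk \<Delta> j i" if "j < n" for j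
  proof -
    have AT2: "transpose (Ablk \<Delta> i j) = Ablk \<Delta> j i" using AT[OF that] by (metis transpose_transpose)
      have t1: "transpose (S i ** transpose (S j) ** Ablk \<Delta> j i) = Ablk \<Delta> i j ** S j ** transpose (S i)"
        by (simp only: matrix_transpose_mul transpose_transpose AT[OF that] matrix_mul_assoc)
      have t2: "transpose (Ablk \<Delta> i j ** S j ** transpose (S i)) = S i ** transpose (S j) ** Ablk \<Delta> j i"
        by (simp only: matrix_transpose_mul transpose_transpose AT2 matrix_mul_assoc)
      show ?thesis by (simp only: transpose_add' t1 t2)
  qed
  have "(\<Sum>j<n. transpose (S i ** transpose (S j) ** Ablk \<Delta> j i + Ablk \<Delta> i j ** S j ** transpose (S i)))
     = (\<Sum>j<n. S i ** transpose (S j) ** Ablk \<Delta> j i + Ablk \<Delta> i j ** S j ** transpose (S i))"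
    by (rule sum.cong[OF refl]) (metis TT add.commute lessThan_iff)
  then show ?thesis
    by (simp only: Lam_def transpose_scalar transpose_sum)
qed

definition outer :: "real^'d \<Rightarrow> real^'p \<Rightarrow> real^'p^'d" where
  "outer v w = (\<chi> r c. v$r * w$c)"

lemma outer_inner:
  fixes M :: "real^'d^'d"
  shows "inner M (outer v w ** transpose (outer v w)) = inner w w * inner v (M *v v)"
proof -
  have "outer v w ** transpose (outer v w) = inner w w *\<^sub>R (\<chi> r s. v$r * v$s)"
    by (simp add: outer_def vec_eq_iff matrix_matrix_mult_def transpose_def inner_vec_def
        sum_distrib_left mult_ac)
  then show ?thesis
    by (simp add: inner_vec_def matrix_vector_mult_def sum_distrib_left mult_ac)
qed

lemma outer_tangent:
  fixes S :: "real^'p^'d"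
  assumes "S *v w = 0"
  shows "outer v w \<in> tangent S"
proof -
  have z: "(\<Sum>c\<in>UNIV. S$r$c * w$c) = 0" for r
    using assms by (simp add: vec_eq_iff matrix_vector_mult_def)
  have "(\<Sum>c\<in>UNIV. S$r$c * (v$s * w$c)) = v$s * (\<Sum>c\<in>UNIV. S$r$c * w$c)" for r s
    by (simp add: sum_distrib_left mult_ac)
  moreover have "(\<Sum>c\<in>UNIV. v$r * w$c * S$s$c) = v$r * (\<Sum>c\<in>UNIV. S$s$c * w$c)" for r s
    by (simp add: sum_distrib_left mult_ac)
  ultimately show ?thesis using z
    by (simp add: tangent_def outer_def vec_eq_iff matrix_matrix_mult_def transpose_def)
qed

lemma second_order_ge1:
  fixes \<Delta> :: "nat \<Rightarrow> nat \<Rightarrow> real^'d^'d" and S :: "nat \<Rightarrow> real^'p^'d"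
  assumes i: "i < n" and diag: "\<forall>i<n. \<Delta> i i = 0" and p: "CARD('d) < CARD('p)"
    and crit: "second_order_critical n \<Delta> S"
    and v: "v \<noteq> 0" and ev: "Lam n \<Delta> S i *v v = l *\<^sub>R v"
  shows "l \<ge> 1"
proof -
  obtain w :: "real^'p" where w: "w \<noteq> 0" "S i *v w = 0" using exists_kernel[OF p] by blast
  define Y where "Y = outer v w"
  define Sd where "Sd = (\<lambda>k. if k = i then Y else 0)"
  have tan: "\<forall>k<n. Sd k \<in> tangent (S k)"
    using outer_tangent[OF w(2)] by (auto simp: Sd_def Y_def tangent_def transpose_zero')
  have ineq: "(\<Sum>k<n. Lam n \<Delta> S k \<bullet> (Sd k ** transpose (Sd k)))
          \<ge> (\<Sum>k<n. \<Sum>m<n. Ablk \<Delta> k m \<bullet> (Sd k ** transpose (Sd m)))"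
    using conjunct2[OF crit[unfolded second_order_critical_def], rule_format, OF tan[rule_format]] .
  have L: "(\<Sum>k<n. Lam n \<Delta> S k \<bullet> (Sd k ** transpose (Sd k))) = Lam n \<Delta> S i \<bullet> (Y ** transpose Y)"
    by (subst sum_single[where i=i]) (use i in \<open>auto simp: Sd_def\<close>)
  have R: "(\<Sum>k<n. \<Sum>m<n. Ablk \<Delta> k m \<bullet> (Sd k ** transpose (Sd m))) = Ablk \<Delta> i i \<bullet> (Y ** transpose Y)"
  proof -
    have "(\<Sum>k<n. \<Sum>m<n. Ablk \<Delta> k m \<bullet> (Sd k ** transpose (Sd m))) = (\<Sum>m<n. Ablk \<Delta> i m \<bullet> (Sd i ** transpose (Sd m)))"
      by (subst sum_single[where i=i]) (use i in \<open>auto simp: Sd_def\<close>)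
    also have "\<dots> = Ablk \<Delta> i i \<bullet> (Y ** transpose Y)"
      by (subst sum_single[where i=i]) (use i in \<open>auto simp: Sd_def transpose_zero'\<close>)
    finally show ?thesis .
  qed
  have A: "Ablk \<Delta> i i = mat 1" using diag i by (simp add: Ablk_def)
  have "inner w w * inner v v \<le> inner w w * (l * inner v v)"
    using ineq unfolding L R A Y_def outer_inner ev by simp
  moreover have "inner w w * inner v v > 0" using v w by simp
  ultimately have "(inner w w * inner v v) * 1 \<le> (inner w w * inner v v) * l"
    by (simp add: mult_ac)
  then show ?thesis using \<open>inner w w * inner v v > 0\<close> mult_le_cancel_left_pos by blast
qed

lemma unit_inner:
  fixes a b :: "'a::real_inner"
  assumes "norm a = 1" "norm b = 1"
  shows "inner a b = 1 - (1/2) * (norm (b - a))^2"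
proof -
  have "(norm (b - a))^2 = inner b b - 2 * inner a b + inner a a"
    by (simp add: power2_norm_eq_inner inner_diff_left inner_diff_right inner_commute)
  moreover have "inner a a = 1" "inner b b = 1" using assms by (simp_all add: power2_norm_eq_inner[symmetric])
  ultimately show ?thesis by (simp add: field_simps)
qed

lemma part1_Q:
  fixes \<Delta> :: "nat \<Rightarrow> nat \<Rightarrow> real^'d^'d" and S :: "nat \<Rightarrow> real^'p^'d" and Q :: "real^'p^'d"
  assumes i: "i < n" and sym: "\<forall>i<n. \<forall>j<n. \<Delta> j i = transpose (\<Delta> i j)"
    and orth: "\<forall>i<n. S i ** transpose (S i) = mat 1"
    and crit: "second_order_critical n \<Delta> S"
    and Q: "Q ** transpose Q = mat 1"
    and v1: "norm v = 1" and ev: "Lam n \<Delta> S i *v v = l *\<^sub>R v" and l0: "l \<ge> 0"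
  shows "real n - (1/2) * (\<Sum>j<n. (norm (S j - Q))\<^sup>2) - opnorm (\<Sum>j<n. \<Delta> i j ** S j) \<le> l"
proof -
  define L where "L = Lam n \<Delta> S i"
  define W where "W = (\<Sum>j<n. \<Delta> i j ** S j)"
  define G where "G = (\<Sum>j<n. S j)"
  have LS: "L ** S i = G + W"
  proof -
    have "L ** S i = (\<Sum>j<n. Ablk \<Delta> i j ** S j)"
      using crit i unfolding second_order_critical_def L_def by simp
    also have "\<dots> = (\<Sum>j<n. S j + \<Delta> i j ** S j)"
      by (simp add: Ablk_def matrix_add_rdistrib')
    also have "\<dots> = G + W" by (simp add: G_def W_def sum.distrib)
    finally show ?thesis .
  qed
  have Lsym: "transpose L = L" unfolding L_def by (rule Lam_sym[OF sym i])
  have vL: "v v* L = l *\<^sub>R v"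
    by (metis Lsym ev L_def transpose_matrix_vector)
  have Si1: "norm (v v* S i) = 1"
    using orth_transp_norm[of "S i" v] orth i v1 by simp
  have "v v* (L ** S i) = l *\<^sub>R (v v* S i)"
    by (simp add: vector_matrix_mul_assoc[symmetric] vL scaleR_vector_matrix_assoc)
  then have "norm (v v* (G + W)) = l" using LS Si1 l0 by simp
  then have l1: "norm (v v* G) - norm (v v* W) \<le> l"
    by (metis norm_diff_ineq vector_matrix_mult_add_rdistrib diff_minus_eq_add norm_minus_cancel)
  have W1: "norm (v v* W) \<le> opnorm W"
    using transp_bound[of W "opnorm W" v] opnorm_bound[of W] opnorm_nonneg[of W] v1 by simp
  have Q1: "norm (v v* Q) = 1"
    using orth_transp_norm[of Q v] Q v1 by simp
  have per: "inner (v v* Q) (v v* S j) \<ge> 1 - (1/2) * (norm (S j - Q))\<^sup>2" if j: "j < n" for j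
  proof -
    have Sj1: "norm (v v* S j) = 1" using orth_transp_norm[of "S j" v] orth j v1 by simp
    have "norm (v v* S j - v v* Q) = norm (v v* (S j - Q))"
      by (simp add: vector_matrix_mult_diff_rdistrib)
    also have "\<dots> \<le> norm (S j - Q) * norm v"
      using transp_bound[of "S j - Q" "norm (S j - Q)" v] frob[of "S j - Q"] by simp
    finally have "(norm (v v* S j - v v* Q))\<^sup>2 \<le> (norm (S j - Q))\<^sup>2"
      using v1 by (simp add: power_mono)
    then show ?thesis using unit_inner[OF Q1 Sj1] by simp
  qed
  have "real n - (1/2) * (\<Sum>j<n. (norm (S j - Q))\<^sup>2) = (\<Sum>j<n. 1 - (1/2) * (norm (S j - Q))\<^sup>2)"
    by (simp add: sum_subtractf sum_distrib_left)
  also have "\<dots> \<le> (\<Sum>j<n. inner (v v* Q) (v v* S j))"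
    by (rule sum_mono) (use per in auto)
  also have "\<dots> = inner (v v* Q) (v v* G)"
    by (simp add: G_def sum_vm inner_sum_right)
  also have "\<dots> \<le> norm (v v* G)"
    using norm_cauchy_schwarz[of "v v* Q" "v v* G"] Q1 by simp
  finally show ?thesis using l1 W1 unfolding W_def by linarith
qed

theorem lemma5:
  fixes n :: nat and \<Delta> :: "nat \<Rightarrow> nat \<Rightarrow> real^'d^'d" and S :: "nat \<Rightarrow> real^'p^'d"
    and \<delta> :: real
  assumes n: "n \<ge> 1"
    and p: "CARD('p) > CARD('d)"
    and sym: "\<forall>i<n. \<forall>j<n. \<Delta> j i = transpose (\<Delta> i j)"
    and diag: "\<forall>i<n. \<Delta> i i = 0"
    and \<delta>: "\<delta> > 0"
    and orth: "\<forall>i<n. S i ** transpose (S i) = mat 1"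
    and crit: "second_order_critical n \<Delta> S"
    and close: "dF n S \<le> \<delta> * sqrt (real CARD('d) / real n) * blk_opnorm n \<Delta>"
  shows "(\<forall>i<n. lambda_min (Lam n \<Delta> S i) \<ge>
            real n - \<delta>\<^sup>2 * real CARD('d) * (blk_opnorm n \<Delta>)\<^sup>2 / (2 * real n)
            - Max ((\<lambda>k. opnorm (\<Sum>j\<in>{..<n} - {k}. \<Delta> k j ** S j)) ` {..<n}))
       \<and> Max ((\<lambda>i. opnorm (\<Sum>j\<in>{..<n} - {i}. \<Delta> i j ** S j)) ` {..<n})
          \<le> \<delta> * sqrt (real CARD('d) / real n) * blk_opnorm n \<Delta>
               * Max ((\<lambda>i. col_opnorm n \<Delta> i) ` {..<n})
            + Max ((\<lambda>i. opnorm (\<Sum>j<n. \<Delta> i j)) ` {..<n})"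
proof -
  define B where "B = \<delta> * sqrt (real CARD('d) / real n) * blk_opnorm n \<Delta>"
  define T where "T = {sqrt (\<Sum>i<n. (norm (S i - Q))\<^sup>2) | Q :: real^'p^'d. Q ** transpose Q = mat 1}"
  have dF_eq: "dF n S = Inf T" by (simp add: dF_def T_def)
  obtain Q0 :: "real^'p^'d" where Q0: "Q0 ** transpose Q0 = mat 1"
    using exists_orth[of] p by (meson less_imp_le)
  have Tne: "T \<noteq> {}" using Q0 unfolding T_def by blast
  have lowT: "z \<le> dF n S" if H: "\<And>Q::real^'p^'d. Q ** transpose Q = mat 1 \<Longrightarrow> z \<le> sqrt (\<Sum>i<n. (norm (S i - Q))\<^sup>2)" for z
    unfolding dF_eq by (rule cInf_greatest[OF Tne]) (use H in \<open>auto simp: T_def\<close>)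
  have D0: "0 \<le> dF n S" by (rule lowT) (simp add: sum_nonneg)
  have DB: "dF n S \<le> B" using close B_def by simp
  have B0: "0 \<le> B" using D0 DB by linarith
  have Wdef: "(\<Sum>j\<in>{..<n}-{i}. \<Delta> i j ** S j) = (\<Sum>j<n. \<Delta> i j ** S j)" if i: "i < n" for i
  proof -
    have "(\<Sum>j<n. \<Delta> i j ** S j) = \<Delta> i i ** S i + (\<Sum>j\<in>{..<n}-{i}. \<Delta> i j ** S j)"
      using i by (simp add: sum.remove)
    then show ?thesis using diag i by simp
  qed
  have P2: "opnorm (\<Sum>j<n. \<Delta> i j ** S j) \<le> col_opnorm n \<Delta> i * dF n S + opnorm (\<Sum>j<n. \<Delta> i j)"
    if i: "i < n" for i
  proof -
    have symi: "\<forall>j<n. \<Delta> j i = transpose (\<Delta> i j)" using sym i by blast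
    define c where "c = col_opnorm n \<Delta> i"
    define a where "a = opnorm (\<Sum>j<n. \<Delta> i j ** S j)"
    define b where "b = opnorm (\<Sum>j<n. \<Delta> i j)"
    have H: "a \<le> c * sqrt (\<Sum>j<n. (norm (S j - Q))\<^sup>2) + b" if "Q ** transpose Q = mat 1" for Q :: "real^'p^'d"
      unfolding a_def b_def c_def by (rule part2_Q[OF symi that])
    have c0: "0 \<le> c" unfolding c_def by (rule col_nonneg)
    show ?thesis
    proof (cases "c = 0")
      case True
      then show ?thesis using H[OF Q0] a_def b_def c_def by simp
    next
      case False
      then have cp: "c > 0" using c0 by simp
      have "(a - b) / c \<le> dF n S"
      proof (rule lowT)
        fix Q :: "real^'p^'d" assume "Q ** transpose Q = mat 1"
        from H[OF this] show "(a - b) / c \<le> sqrt (\<Sum>j<n. (norm (S j - Q))\<^sup>2)"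
          using cp by (simp add: pos_divide_le_eq mult.commute)
      qed
      then have "a - b \<le> c * dF n S" using cp by (simp add: pos_divide_le_eq mult.commute)
      then show ?thesis unfolding a_def b_def c_def by linarith
    qed
  qed
  have P1: "real n - B\<^sup>2 / 2 - opnorm (\<Sum>j<n. \<Delta> i j ** S j) \<le> lambda_min (Lam n \<Delta> S i)"
    if i: "i < n" for i
  proof -
    define L where "L = Lam n \<Delta> S i"
    define E where "E = {l. \<exists>v. v \<noteq> 0 \<and> L *v v = l *\<^sub>R v}"
    have Lsym: "transpose L = L" unfolding L_def by (rule Lam_sym[OF sym i])
    have fin: "finite E" unfolding E_def by (rule eig_finite[OF Lsym])
    have ne: "E \<noteq> {}" using eig_exists[OF Lsym] unfolding E_def by blast
    have lm: "lambda_min L = Min E" by (simp add: lambda_min_def E_def)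
    define l where "l = Min E"
    have "l \<in> E" unfolding l_def by (rule Min_in[OF fin ne])
    then obtain v where v: "v \<noteq> 0" "L *v v = l *\<^sub>R v" unfolding E_def by blast
    have l1: "l \<ge> 1" using second_order_ge1[OF i diag p crit v(1)] v(2) L_def by blast
    define u where "u = (1 / norm v) *\<^sub>R v"
    have u1: "norm u = 1" using v(1) by (simp add: u_def)
    have uev: "L *v u = l *\<^sub>R u" using v(2) by (simp add: u_def matrix_vector_mult_scaleR)
    define a where "a = opnorm (\<Sum>j<n. \<Delta> i j ** S j)"
    have H: "real n - (1/2) * (\<Sum>j<n. (norm (S j - Q))\<^sup>2) - a \<le> l"
      if "Q ** transpose Q = mat 1" for Q :: "real^'p^'d"
      unfolding a_def
      by (rule part1_Q[OF i sym orth crit that u1]) (use uev l1 L_def in auto)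
    have "real n - a - l \<le> B\<^sup>2 / 2"
    proof (cases "real n - a - l \<le> 0")
      case True
      have "0 \<le> B\<^sup>2 / 2" by simp
      with True show ?thesis by linarith
    next
      case False
      define c where "c = 2 * (real n - a - l)"
      have cp: "c > 0" using False c_def by simp
      have "sqrt c \<le> dF n S"
      proof (rule lowT)
        fix Q :: "real^'p^'d" assume "Q ** transpose Q = mat 1"
        from H[OF this] have "c \<le> (\<Sum>j<n. (norm (S j - Q))\<^sup>2)" by (simp add: c_def)
        then show "sqrt c \<le> sqrt (\<Sum>j<n. (norm (S j - Q))\<^sup>2)" by simp
      qed
      then have "sqrt c \<le> B" using DB by linarith
      then have "(sqrt c)\<^sup>2 \<le> B\<^sup>2" by (rule power_mono) (use cp in simp)
      then have "c \<le> B\<^sup>2" using cp by simp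
      then show ?thesis by (simp add: c_def)
    qed
    then show ?thesis using lm l_def L_def a_def by simp
  qed
  have B2: "B\<^sup>2 / 2 = \<delta>\<^sup>2 * real CARD('d) * (blk_opnorm n \<Delta>)\<^sup>2 / (2 * real n)"
    by (simp add: B_def power_mult_distrib real_sqrt_pow2 divide_nonneg_nonneg)
  define Mx where "Mx = Max ((\<lambda>k. opnorm (\<Sum>j\<in>{..<n} - {k}. \<Delta> k j ** S j)) ` {..<n})"
  have Mx: "opnorm (\<Sum>j<n. \<Delta> i j ** S j) \<le> Mx" if "i < n" for i
    unfolding Mx_def using Wdef[OF that] that by (intro Max_ge) (auto intro: image_eqI[where x=i])
  have part1: "\<forall>i<n. lambda_min (Lam n \<Delta> S i) \<ge>
            real n - \<delta>\<^sup>2 * real CARD('d) * (blk_opnorm n \<Delta>)\<^sup>2 / (2 * real n) - Mx"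
    using P1 Mx B2 by (smt (verit))
  have nne: "{..<n} \<noteq> {}" using n by (metis lessThan_iff less_le_trans zero_less_one empty_iff)
  have part2: "Mx \<le> B * Max ((\<lambda>i. col_opnorm n \<Delta> i) ` {..<n}) + Max ((\<lambda>i. opnorm (\<Sum>j<n. \<Delta> i j)) ` {..<n})"
    unfolding Mx_def
  proof (rule Max.boundedI)
    show "finite ((\<lambda>k. opnorm (\<Sum>j\<in>{..<n} - {k}. \<Delta> k j ** S j)) ` {..<n})" by simp
    show "(\<lambda>k. opnorm (\<Sum>j\<in>{..<n} - {k}. \<Delta> k j ** S j)) ` {..<n} \<noteq> {}" using nne by simp
    fix x assume "x \<in> (\<lambda>k. opnorm (\<Sum>j\<in>{..<n} - {k}. \<Delta> k j ** S j)) ` {..<n}"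
    then obtain i where i: "i < n" and x: "x = opnorm (\<Sum>j\<in>{..<n} - {i}. \<Delta> i j ** S j)" by auto
    have c1: "col_opnorm n \<Delta> i \<le> Max ((\<lambda>i. col_opnorm n \<Delta> i) ` {..<n})"
      using i by (intro Max_ge) auto
    have c2: "opnorm (\<Sum>j<n. \<Delta> i j) \<le> Max ((\<lambda>i. opnorm (\<Sum>j<n. \<Delta> i j)) ` {..<n})"
      using i by (intro Max_ge) auto
    have "col_opnorm n \<Delta> i * dF n S \<le> col_opnorm n \<Delta> i * B"
      using DB col_nonneg[of n \<Delta> i] by (simp add: mult_left_mono)
    also have "\<dots> \<le> Max ((\<lambda>i. col_opnorm n \<Delta> i) ` {..<n}) * B"
      using c1 B0 by (simp add: mult_right_mono)
    finally have cb: "col_opnorm n \<Delta> i * dF n S \<le> Max ((\<lambda>i. col_opnorm n \<Delta> i) ` {..<n}) * B" .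
    have "x \<le> Max ((\<lambda>i. col_opnorm n \<Delta> i) ` {..<n}) * B + Max ((\<lambda>i. opnorm (\<Sum>j<n. \<Delta> i j)) ` {..<n})"
    proof -
      have "x = opnorm (\<Sum>j<n. \<Delta> i j ** S j)" using x Wdef[OF i] by simp
      then show ?thesis using P2[OF i] c2 cb by linarith
    qed
    then show "x \<le> B * Max ((\<lambda>i. col_opnorm n \<Delta> i) ` {..<n}) + Max ((\<lambda>i. opnorm (\<Sum>j<n. \<Delta> i j)) ` {..<n})"
      by (simp add: mult.commute)
  qed
  show ?thesis using part1 part2 unfolding Mx_def B_def by simp
qed

end
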